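(* Fix a realization of the field $\{h_v\}$, $\beta>0$, $N=2^n$ with $n\ge10$, $\Delta>0$, $\Delta'\ge0$, a set $S\subset\Lambda_N$ with $\Lambda_{N/8}\subset S$, $\Gamma=\partial S$, and $\tau^+,\tau^-\in\{-1,1\}^\Gamma$ with $\tau^+\ge\tau^-$. Then for any nonempty increasing set $\Omega^+\subset\{-1,1\}^S$ and any nonempty decreasing set $\Omega^-\subset\{-1,1\}^S$, $$\Delta\int_0^1\big(m^{S,\tau^+,t}_{\Omega^+}-m^{S,\tau^-,t}_{\Omega^-}\big)\,dt\leq8\sum_{v\in\Gamma}(\tau^+_v-\tau^-_v)-\frac1\beta\Big(\log\mu^{S,\tau^+,0}(\Omega^+)+\log\mu^{S,\tau^-,1}(\Omega^-)\Big).$$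
   Context: Write $u\sim v$ if $|u-v|_1=1$; $\partial A=\{v\in\mathbb Z^2\setminus A:u\sim v\text{ for some }u\in A\}$; $\Lambda_r=\{v\in\mathbb Z^2:|v|_\infty\le r\}$. For $0\le t\le1$ define the field $h^{(t)}_v=h_v+\Delta'$ for $v\in\Lambda_N\setminus\Lambda_{N/8}$ and $h^{(t)}_v=h_v+t\Delta$ for $v\in\Lambda_{N/8}$. For $\tau\in\{-1,1\}^\Gamma$ and $\sigma\in\{-1,1\}^S$, $H^{S,\tau,t}(\sigma)=-\big(\sum_{u\sim v,\,u,v\in S}\sigma_u\sigma_v+\sum_{u\sim v,\,u\in S,v\in\Gamma}\sigma_u\tau_v+\sum_{u\in S}\sigma_uh^{(t)}_u\big)$ and $\mu^{S,\tau,t}(\sigma)\propto e^{-\beta H^{S,\tau,t}(\sigma)}$. For $\Omega\subset\{-1,1\}^S$ with $\mu^{S,\tau,t}(\Omega)>0$, $\mu^{S,\tau,t}_\Omega=\mu^{S,\tau,t}(\cdot\mid\Omega)$ and $m^{S,\tau,t}_\Omega=\sum_{v\in\Lambda_{N/32}}\langle\sigma_v\rangle_{\mu^{S,\tau,t}_\Omega}$. A set $\Omega\subset\{-1,1\}^S$ is increasing if $\sigma\in\Omega$ and $\sigma'\ge\sigma$ imply $\sigma'\in\Omega$; it is decreasing if its complement is increasing. *)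

theory Defs
  imports "HOL-Analysis.Analysis"
begin

type_synonym vtx = "int \<times> int"

definition adj :: "vtx \<Rightarrow> vtx \<Rightarrow> bool" where
  "adj u v \<longleftrightarrow> \<bar>fst u - fst v\<bar> + \<bar>snd u - snd v\<bar> = 1"

definition bdry :: "vtx set \<Rightarrow> vtx set" where
  "bdry A = {v. v \<notin> A \<and> (\<exists>u\<in>A. adj u v)}"

definition Lam :: "int \<Rightarrow> vtx set" where
  "Lam r = {v. \<bar>fst v\<bar> \<le> r \<and> \<bar>snd v\<bar> \<le> r}"

definition configs :: "vtx set \<Rightarrow> (vtx \<Rightarrow> real) set" where
  "configs A = {\<sigma>. (\<forall>v\<in>A. \<sigma> v = 1 \<or> \<sigma> v = -1) \<and> (\<forall>v. v \<notin> A \<longrightarrow> \<sigma> v = 0)}"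

definition increasing_set :: "vtx set \<Rightarrow> (vtx \<Rightarrow> real) set \<Rightarrow> bool" where
  "increasing_set A \<Omega> \<longleftrightarrow> \<Omega> \<subseteq> configs A \<and>
     (\<forall>\<sigma>\<in>\<Omega>. \<forall>\<sigma>'\<in>configs A. (\<forall>v\<in>A. \<sigma> v \<le> \<sigma>' v) \<longrightarrow> \<sigma>' \<in> \<Omega>)"

definition decreasing_set :: "vtx set \<Rightarrow> (vtx \<Rightarrow> real) set \<Rightarrow> bool" where
  "decreasing_set A \<Omega> \<longleftrightarrow> \<Omega> \<subseteq> configs A \<and> increasing_set A (configs A - \<Omega>)"

definition hfield :: "(vtx \<Rightarrow> real) \<Rightarrow> real \<Rightarrow> real \<Rightarrow> int \<Rightarrow> real \<Rightarrow> vtx \<Rightarrow> real" where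
  "hfield h \<Delta> \<Delta>' N t v =
     (if v \<in> Lam (N div 8) then h v + t * \<Delta>
      else if v \<in> Lam N then h v + \<Delta>' else h v)"

text \<open>Hamiltonian; the sum over nearest-neighbour pairs inside S is over unordered
  edges, i.e. half the sum over ordered pairs.\<close>
definition Ham :: "(vtx \<Rightarrow> real) \<Rightarrow> real \<Rightarrow> real \<Rightarrow> int \<Rightarrow> vtx set \<Rightarrow> (vtx \<Rightarrow> real)
     \<Rightarrow> real \<Rightarrow> (vtx \<Rightarrow> real) \<Rightarrow> real" where
  "Ham h \<Delta> \<Delta>' N S \<tau> t \<sigma> =
     - ((1/2) * (\<Sum>(u,v)\<in>{(u,v). u \<in> S \<and> v \<in> S \<and> adj u v}. \<sigma> u * \<sigma> v)
        + (\<Sum>(u,v)\<in>{(u,v). u \<in> S \<and> v \<in> bdry S \<and> adj u v}. \<sigma> u * \<tau> v)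
        + (\<Sum>u\<in>S. \<sigma> u * hfield h \<Delta> \<Delta>' N t u))"

definition weight :: "real \<Rightarrow> (vtx \<Rightarrow> real) \<Rightarrow> real \<Rightarrow> real \<Rightarrow> int \<Rightarrow> vtx set \<Rightarrow> (vtx \<Rightarrow> real)
     \<Rightarrow> real \<Rightarrow> (vtx \<Rightarrow> real) \<Rightarrow> real" where
  "weight \<beta> h \<Delta> \<Delta>' N S \<tau> t \<sigma> = exp (- \<beta> * Ham h \<Delta> \<Delta>' N S \<tau> t \<sigma>)"

definition gibbs :: "real \<Rightarrow> (vtx \<Rightarrow> real) \<Rightarrow> real \<Rightarrow> real \<Rightarrow> int \<Rightarrow> vtx set \<Rightarrow> (vtx \<Rightarrow> real)
     \<Rightarrow> real \<Rightarrow> (vtx \<Rightarrow> real) set \<Rightarrow> real" where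
  "gibbs \<beta> h \<Delta> \<Delta>' N S \<tau> t \<Omega> =
     (\<Sum>\<sigma>\<in>\<Omega> \<inter> configs S. weight \<beta> h \<Delta> \<Delta>' N S \<tau> t \<sigma>) /
     (\<Sum>\<sigma>\<in>configs S. weight \<beta> h \<Delta> \<Delta>' N S \<tau> t \<sigma>)"

definition cond_spin :: "real \<Rightarrow> (vtx \<Rightarrow> real) \<Rightarrow> real \<Rightarrow> real \<Rightarrow> int \<Rightarrow> vtx set \<Rightarrow> (vtx \<Rightarrow> real)
     \<Rightarrow> real \<Rightarrow> (vtx \<Rightarrow> real) set \<Rightarrow> vtx \<Rightarrow> real" where
  "cond_spin \<beta> h \<Delta> \<Delta>' N S \<tau> t \<Omega> v =
     (\<Sum>\<sigma>\<in>\<Omega> \<inter> configs S. \<sigma> v * weight \<beta> h \<Delta> \<Delta>' N S \<tau> t \<sigma>) /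
     (\<Sum>\<sigma>\<in>\<Omega> \<inter> configs S. weight \<beta> h \<Delta> \<Delta>' N S \<tau> t \<sigma>)"

definition magn :: "real \<Rightarrow> (vtx \<Rightarrow> real) \<Rightarrow> real \<Rightarrow> real \<Rightarrow> int \<Rightarrow> vtx set \<Rightarrow> (vtx \<Rightarrow> real)
     \<Rightarrow> real \<Rightarrow> (vtx \<Rightarrow> real) set \<Rightarrow> real" where
  "magn \<beta> h \<Delta> \<Delta>' N S \<tau> t \<Omega> =
     (\<Sum>v\<in>Lam (N div 32). cond_spin \<beta> h \<Delta> \<Delta>' N S \<tau> t \<Omega> v)"

end

theory Submission
  imports Defs
begin


lemma one_dim:
  fixes a0 a1 b0 b1 c0 c1 d0 d1 :: real
  assumes nn: "a0\<ge>0" "a1\<ge>0" "b0\<ge>0" "b1\<ge>0" "c0\<ge>0" "c1\<ge>0" "d0\<ge>0" "d1\<ge>0"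
    and h1: "a0*b0 \<le> c0*d0" and h2: "a0*b1 \<le> c1*d0" and h3: "a1*b0 \<le> c1*d0" and h4: "a1*b1 \<le> c1*d1"
  shows "(a0+a1)*(b0+b1) \<le> (c0+c1)*(d0+d1)"
proof (cases "c1*d0 = 0")
  case True
  then have "a0*b1 \<le> 0" "a1*b0 \<le> 0" using h2 h3 by auto
  moreover have "c0*d1 \<ge> 0" "c1*d0 \<ge> 0" using nn by auto
  ultimately show ?thesis using h1 h4 by (simp add: algebra_simps)
next
  case False
  define M where "M = c1*d0"
  define P where "P = c0*d1"
  define u where "u = a0*b1"
  define w where "w = a1*b0"
  have Mpos: "M > 0" using False nn unfolding M_def by (simp add: less_le)
  have uM: "u \<le> M" "w \<le> M" using h2 h3 by (auto simp: M_def u_def w_def)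
  have uv: "u*w \<le> M*P"
  proof -
    have "u*w = (a0*b0)*(a1*b1)" by (simp add: u_def w_def algebra_simps)
    also have "\<dots> \<le> (c0*d0)*(c1*d1)"
      using nn by (intro mult_mono[OF h1 h4]) auto
    also have "\<dots> = M*P" by (simp add: M_def P_def algebra_simps)
    finally show ?thesis .
  qed
  have "(M-u)*(M-w) \<ge> 0" using uM by simp
  hence "M*(u+w) \<le> M*M + u*w" by (simp add: algebra_simps)
  also have "\<dots> \<le> M*(M+P)" using uv by (simp add: algebra_simps)
  finally have "u+w \<le> M+P" using Mpos by simp
  then show ?thesis using h1 h4 by (simp add: M_def P_def u_def w_def algebra_simps)
qed

lemma sum_Pow_insert:
  assumes "finite S" "x \<notin> S"
  shows "(\<Sum>X\<in>Pow (insert x S). f X) = (\<Sum>X\<in>Pow S. f X + f (insert x X))"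
proof -
  have d: "Pow S \<inter> insert x ` Pow S = {}" using assms by auto
  have inj: "inj_on (insert x) (Pow S)" using assms unfolding inj_on_def by (metis PowD insert_ident subsetD)
  have "(\<Sum>X\<in>Pow (insert x S). f X) = (\<Sum>X\<in>Pow S. f X) + (\<Sum>X\<in>insert x ` Pow S. f X)"
    unfolding Pow_insert using assms d by (intro sum.union_disjoint) auto
  also have "(\<Sum>X\<in>insert x ` Pow S. f X) = (\<Sum>X\<in>Pow S. f (insert x X))"
    using inj by (simp add: sum.reindex)
  finally show ?thesis by (simp add: sum.distrib)
qed

lemma four_functions:
  fixes S :: "'a set"
  assumes "finite S"
  shows "\<And>\<alpha> \<beta> \<gamma> \<delta> :: 'a set \<Rightarrow> real.
    (\<forall>X. X \<subseteq> S \<longrightarrow> \<alpha> X \<ge> 0 \<and> \<beta> X \<ge> 0 \<and> \<gamma> X \<ge> 0 \<and> \<delta> X \<ge> 0) \<Longrightarrow>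
    (\<forall>X Y. X \<subseteq> S \<longrightarrow> Y \<subseteq> S \<longrightarrow> \<alpha> X * \<beta> Y \<le> \<gamma> (X \<union> Y) * \<delta> (X \<inter> Y)) \<Longrightarrow>
    (\<Sum>X\<in>Pow S. \<alpha> X) * (\<Sum>X\<in>Pow S. \<beta> X) \<le> (\<Sum>X\<in>Pow S. \<gamma> X) * (\<Sum>X\<in>Pow S. \<delta> X)"
  using assms
proof (induction S rule: finite_induct)
  case empty
  then show ?case by auto
next
  case (insert x S)
  define \<alpha>' where "\<alpha>' X = \<alpha> X + \<alpha> (insert x X)" for X
  define \<beta>' where "\<beta>' X = \<beta> X + \<beta> (insert x X)" for X
  define \<gamma>' where "\<gamma>' X = \<gamma> X + \<gamma> (insert x X)" for X
  define \<delta>' where "\<delta>' X = \<delta> X + \<delta> (insert x X)" for X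
  have nn: "\<forall>X. X \<subseteq> S \<longrightarrow> \<alpha>' X \<ge> 0 \<and> \<beta>' X \<ge> 0 \<and> \<gamma>' X \<ge> 0 \<and> \<delta>' X \<ge> 0"
  proof (intro allI impI)
    fix X assume "X \<subseteq> S"
    then have "X \<subseteq> insert x S" "insert x X \<subseteq> insert x S" by auto
    then show "\<alpha>' X \<ge> 0 \<and> \<beta>' X \<ge> 0 \<and> \<gamma>' X \<ge> 0 \<and> \<delta>' X \<ge> 0"
      using insert.prems(1) unfolding \<alpha>'_def \<beta>'_def \<gamma>'_def \<delta>'_def
      by (metis add_nonneg_nonneg)
  qed
  have cond: "\<forall>X Y. X \<subseteq> S \<longrightarrow> Y \<subseteq> S \<longrightarrow> \<alpha>' X * \<beta>' Y \<le> \<gamma>' (X \<union> Y) * \<delta>' (X \<inter> Y)"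
  proof (intro allI impI)
    fix X Y assume XS: "X \<subseteq> S" and YS: "Y \<subseteq> S"
    have xX: "x \<notin> X" "x \<notin> Y" using XS YS insert.hyps by auto
    have s: "X \<subseteq> insert x S" "Y \<subseteq> insert x S" "insert x X \<subseteq> insert x S" "insert x Y \<subseteq> insert x S"
      using XS YS by auto
    note P = insert.prems(2)[rule_format]
    have e1: "insert x X \<union> Y = insert x (X \<union> Y)" "X \<union> insert x Y = insert x (X \<union> Y)"
      "insert x X \<union> insert x Y = insert x (X \<union> Y)" by auto
    have e2: "insert x X \<inter> Y = X \<inter> Y" "X \<inter> insert x Y = X \<inter> Y"
      "insert x X \<inter> insert x Y = insert x (X \<inter> Y)" using xX by auto
    have Xs: "X \<union> Y \<subseteq> insert x S" "X \<inter> Y \<subseteq> insert x S" "insert x (X \<union> Y) \<subseteq> insert x S"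
      "insert x (X \<inter> Y) \<subseteq> insert x S" using XS YS by auto
    show "\<alpha>' X * \<beta>' Y \<le> \<gamma>' (X \<union> Y) * \<delta>' (X \<inter> Y)"
      unfolding \<alpha>'_def \<beta>'_def \<gamma>'_def \<delta>'_def
      apply (rule one_dim)
      using insert.prems(1) s Xs apply (simp_all only: )
      using P[OF s(1) s(2)] P[OF s(1) s(4)] P[OF s(3) s(2)] P[OF s(3) s(4)]
      by (auto simp: e1 e2 insert.prems(1))
  qed
  have IH: "(\<Sum>X\<in>Pow S. \<alpha>' X) * (\<Sum>X\<in>Pow S. \<beta>' X) \<le> (\<Sum>X\<in>Pow S. \<gamma>' X) * (\<Sum>X\<in>Pow S. \<delta>' X)"
    by (rule insert.IH[OF nn cond])
  then show ?case using insert.hyps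
    by (simp add: sum_Pow_insert \<alpha>'_def \<beta>'_def \<gamma>'_def \<delta>'_def)
qed



lemma holley_pow:
  fixes S :: "'a set" and a b :: "'a set \<Rightarrow> real"
  assumes fin: "finite S" and nn: "\<forall>X. X \<subseteq> S \<longrightarrow> a X \<ge> 0 \<and> b X \<ge> 0"
    and cond: "\<forall>X Y. X \<subseteq> S \<longrightarrow> Y \<subseteq> S \<longrightarrow> a X * b Y \<le> a (X \<union> Y) * b (X \<inter> Y)"
    and US: "U \<subseteq> Pow S" and up: "\<forall>X Y. X \<in> U \<longrightarrow> X \<subseteq> Y \<longrightarrow> Y \<subseteq> S \<longrightarrow> Y \<in> U"
  shows "(\<Sum>X\<in>Pow S. a X) * (\<Sum>X\<in>U. b X) \<le> (\<Sum>X\<in>U. a X) * (\<Sum>X\<in>Pow S. b X)"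
proof -
  have e: "(\<Sum>X\<in>U. f X) = (\<Sum>X\<in>Pow S. if X \<in> U then f X else 0)" for f :: "'a set \<Rightarrow> real"
  proof -
    have "U = Pow S \<inter> U" using US by auto
    then show ?thesis using fin by (metis finite_Pow_iff sum.inter_restrict)
  qed
  have "(\<Sum>X\<in>Pow S. a X) * (\<Sum>X\<in>Pow S. if X \<in> U then b X else 0)
     \<le> (\<Sum>X\<in>Pow S. if X \<in> U then a X else 0) * (\<Sum>X\<in>Pow S. b X)"
  proof (rule four_functions[OF fin, of a "\<lambda>X. if X \<in> U then b X else 0" "\<lambda>X. if X \<in> U then a X else 0" b])
    show "\<forall>X. X \<subseteq> S \<longrightarrow> a X \<ge> 0 \<and> (if X \<in> U then b X else 0) \<ge> 0 \<and> (if X \<in> U then a X else 0) \<ge> 0 \<and> b X \<ge> 0"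
      using nn by auto
    show "\<forall>X Y. X \<subseteq> S \<longrightarrow> Y \<subseteq> S \<longrightarrow> a X * (if Y \<in> U then b Y else 0) \<le> (if X \<union> Y \<in> U then a (X \<union> Y) else 0) * b (X \<inter> Y)"
    proof (intro allI impI)
      fix X Y assume XS: "X \<subseteq> S" and YS: "Y \<subseteq> S"
      show "a X * (if Y \<in> U then b Y else 0) \<le> (if X \<union> Y \<in> U then a (X \<union> Y) else 0) * b (X \<inter> Y)"
      proof (cases "Y \<in> U")
        case True
        then have "X \<union> Y \<in> U" using up XS YS by blast
        then show ?thesis using True cond XS YS by auto
      next
        case False
        have "X \<union> Y \<subseteq> S" "X \<inter> Y \<subseteq> S" using XS YS by auto
        then have "a (X \<union> Y) \<ge> 0" "b (X \<inter> Y) \<ge> 0" using nn by blast+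
        then show ?thesis using False by auto
      qed
    qed
  qed
  then show ?thesis by (simp only: e[symmetric])
qed

definition cfg :: "vtx set \<Rightarrow> vtx set \<Rightarrow> vtx \<Rightarrow> real" where
  "cfg S X = (\<lambda>v. if v \<in> X then 1 else if v \<in> S then -1 else 0)"

lemma cfg_in: "X \<subseteq> S \<Longrightarrow> cfg S X \<in> configs S"
  unfolding cfg_def configs_def by auto

lemma configs_eq: "configs S = cfg S ` Pow S"
proof
  show "cfg S ` Pow S \<subseteq> configs S" using cfg_in by auto
  show "configs S \<subseteq> cfg S ` Pow S"
  proof
    fix \<sigma> assume s: "\<sigma> \<in> configs S"
    have "\<sigma> = cfg S {v\<in>S. \<sigma> v = 1}"
      using s unfolding configs_def cfg_def by (auto intro!: ext)
    then show "\<sigma> \<in> cfg S ` Pow S" by blast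
  qed
qed

lemma cfg_inj: "inj_on (cfg S) (Pow S)"
proof (rule inj_onI)
  fix X Y assume "X \<in> Pow S" "Y \<in> Pow S" "cfg S X = cfg S Y"
  have "(v \<in> X) = (v \<in> Y)" for v
  proof -
    have "cfg S X v = cfg S Y v" using \<open>cfg S X = cfg S Y\<close> by simp
    then show ?thesis by (auto simp: cfg_def split: if_splits)
  qed
  then show "X = Y" by blast
qed

lemma finite_configs: "finite S \<Longrightarrow> finite (configs S)"
  by (simp add: configs_eq)

lemma cfg_sup: "X \<subseteq> S \<Longrightarrow> Y \<subseteq> S \<Longrightarrow> cfg S (X \<union> Y) = (\<lambda>v. max (cfg S X v) (cfg S Y v))"
  unfolding cfg_def by (auto intro!: ext)

lemma cfg_inf: "X \<subseteq> S \<Longrightarrow> Y \<subseteq> S \<Longrightarrow> cfg S (X \<inter> Y) = (\<lambda>v. min (cfg S X v) (cfg S Y v))"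
  unfolding cfg_def by (auto intro!: ext)

lemma sum_configs_sub:
  assumes "U \<subseteq> configs S"
  shows "(\<Sum>\<sigma>\<in>U. f \<sigma>) = (\<Sum>X\<in>{X\<in>Pow S. cfg S X \<in> U}. f (cfg S X))"
proof -
  define A where "A = {X\<in>Pow S. cfg S X \<in> U}"
  have eq: "cfg S ` A = U" using assms configs_eq unfolding A_def by auto
  have inj: "inj_on (cfg S) A"
    using cfg_inj by (rule inj_on_subset) (auto simp: A_def)
  have "sum f (cfg S ` A) = sum (f \<circ> cfg S) A" by (rule sum.reindex[OF inj])
  then have "sum f U = sum (f \<circ> cfg S) A" unfolding eq .
  then show ?thesis by (simp add: A_def)
qed

lemma sum_configs: "(\<Sum>\<sigma>\<in>configs S. f \<sigma>) = (\<Sum>X\<in>Pow S. f (cfg S X))"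
proof -
  have "{X\<in>Pow S. cfg S X \<in> configs S} = Pow S" using cfg_in by auto
  then show ?thesis using sum_configs_sub[of "configs S" S f] by simp
qed

lemma holley_configs:
  fixes a b :: "(vtx \<Rightarrow> real) \<Rightarrow> real"
  assumes fin: "finite S" and nn: "\<forall>\<sigma>\<in>configs S. a \<sigma> \<ge> 0 \<and> b \<sigma> \<ge> 0"
    and cond: "\<forall>\<sigma>\<in>configs S. \<forall>\<eta>\<in>configs S. a \<sigma> * b \<eta> \<le> a (\<lambda>v. max (\<sigma> v) (\<eta> v)) * b (\<lambda>v. min (\<sigma> v) (\<eta> v))"
    and US: "U \<subseteq> configs S"
    and up: "\<forall>\<sigma>\<in>U. \<forall>\<eta>\<in>configs S. (\<forall>v\<in>S. \<sigma> v \<le> \<eta> v) \<longrightarrow> \<eta> \<in> U"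
  shows "(\<Sum>\<sigma>\<in>configs S. a \<sigma>) * (\<Sum>\<sigma>\<in>U. b \<sigma>) \<le> (\<Sum>\<sigma>\<in>U. a \<sigma>) * (\<Sum>\<sigma>\<in>configs S. b \<sigma>)"
proof -
  define U' where "U' = {X\<in>Pow S. cfg S X \<in> U}"
  have "(\<Sum>X\<in>Pow S. a (cfg S X)) * (\<Sum>X\<in>U'. b (cfg S X)) \<le> (\<Sum>X\<in>U'. a (cfg S X)) * (\<Sum>X\<in>Pow S. b (cfg S X))"
  proof (rule holley_pow[OF fin, of "\<lambda>X. a (cfg S X)" "\<lambda>X. b (cfg S X)" U'])
    show "\<forall>X. X \<subseteq> S \<longrightarrow> 0 \<le> a (cfg S X) \<and> 0 \<le> b (cfg S X)" using nn cfg_in by blast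
    show "\<forall>X Y. X \<subseteq> S \<longrightarrow> Y \<subseteq> S \<longrightarrow> a (cfg S X) * b (cfg S Y) \<le> a (cfg S (X \<union> Y)) * b (cfg S (X \<inter> Y))"
      using cond cfg_in cfg_sup cfg_inf by simp
    show "U' \<subseteq> Pow S" unfolding U'_def by auto
    show "\<forall>X Y. X \<in> U' \<longrightarrow> X \<subseteq> Y \<longrightarrow> Y \<subseteq> S \<longrightarrow> Y \<in> U'"
    proof (intro allI impI)
      fix X Y assume "X \<in> U'" "X \<subseteq> Y" "Y \<subseteq> S"
      moreover have "\<forall>v\<in>S. cfg S X v \<le> cfg S Y v" using \<open>X \<subseteq> Y\<close> unfolding cfg_def by auto
      ultimately show "Y \<in> U'" using up cfg_in unfolding U'_def by blast
    qed
  qed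
  then show ?thesis unfolding sum_configs_sub[OF US, of a] sum_configs_sub[OF US, of b] sum_configs U'_def .
qed



lemma finite_Lam: "finite (Lam r)"
proof -
  have "Lam r \<subseteq> {-r..r} \<times> {-r..r}" unfolding Lam_def by auto
  then show ?thesis by (rule finite_subset) auto
qed

lemma Ham_t:
  "Ham h \<Delta> \<Delta>' N S \<tau> t \<sigma> = Ham h \<Delta> \<Delta>' N S \<tau> 0 \<sigma>
     - t * \<Delta> * (\<Sum>u\<in>S. \<sigma> u * (if u \<in> Lam (N div 8) then 1 else 0))"
proof -
  have "(\<Sum>u\<in>S. \<sigma> u * hfield h \<Delta> \<Delta>' N t u)
      = (\<Sum>u\<in>S. \<sigma> u * hfield h \<Delta> \<Delta>' N 0 u + t * \<Delta> * (\<sigma> u * (if u \<in> Lam (N div 8) then 1 else 0)))"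
    by (rule sum.cong) (auto simp: hfield_def algebra_simps)
  also have "\<dots> = (\<Sum>u\<in>S. \<sigma> u * hfield h \<Delta> \<Delta>' N 0 u) + t * \<Delta> * (\<Sum>u\<in>S. \<sigma> u * (if u \<in> Lam (N div 8) then 1 else 0))"
    by (simp add: sum.distrib sum_distrib_left)
  finally show ?thesis unfolding Ham_def by simp
qed

lemma weight_t:
  assumes "finite S" "Lam (N div 8) \<subseteq> S"
  shows "weight \<beta> h \<Delta> \<Delta>' N S \<tau> t \<sigma> = weight \<beta> h \<Delta> \<Delta>' N S \<tau> 0 \<sigma> * exp (t * (\<beta> * \<Delta> * (\<Sum>u\<in>Lam (N div 8). \<sigma> u)))"
proof -
  have "(\<Sum>u\<in>S. \<sigma> u * (if u \<in> Lam (N div 8) then 1 else 0)) = (\<Sum>u\<in>S. if u \<in> Lam (N div 8) then \<sigma> u else 0)"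
    by (rule sum.cong) auto
  also have "\<dots> = (\<Sum>u\<in>S \<inter> Lam (N div 8). \<sigma> u)" using assms(1) by (simp add: sum.inter_restrict)
  also have "S \<inter> Lam (N div 8) = Lam (N div 8)" using assms(2) by auto
  finally have e: "(\<Sum>u\<in>S. \<sigma> u * (if u \<in> Lam (N div 8) then 1 else 0)) = (\<Sum>u\<in>Lam (N div 8). \<sigma> u)" .
  show ?thesis unfolding weight_def
    by (subst Ham_t) (simp add: e algebra_simps flip: exp_add)
qed

lemma weight_pos: "weight \<beta> h \<Delta> \<Delta>' N S \<tau> t \<sigma> > 0"
  unfolding weight_def by simp

lemma rearr: "(a::real) * c + b * d \<le> max a b * max c d + min a b * min c d"
proof -
  have "a \<le> b \<Longrightarrow> d \<le> c \<Longrightarrow> 0 \<le> (b - a) * (c - d)" by simp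
  moreover have "b \<le> a \<Longrightarrow> c \<le> d \<Longrightarrow> 0 \<le> (a - b) * (d - c)" by simp
  ultimately show ?thesis by (auto simp: max_def min_def algebra_simps)
qed

lemma Ham_super:
  assumes mono: "\<forall>v\<in>bdry S. \<tau>m v \<le> \<tau>p v"
  shows "Ham h \<Delta> \<Delta>' N S \<tau>p t (\<lambda>v. max (\<sigma> v) (\<eta> v)) + Ham h \<Delta> \<Delta>' N S \<tau>m t (\<lambda>v. min (\<sigma> v) (\<eta> v))
      \<le> Ham h \<Delta> \<Delta>' N S \<tau>p t \<sigma> + Ham h \<Delta> \<Delta>' N S \<tau>m t \<eta>"
proof -
  define P1 where "P1 = {(u,v). u \<in> S \<and> v \<in> S \<and> adj u v}"
  define P2 where "P2 = {(u,v). u \<in> S \<and> v \<in> bdry S \<and> adj u v}"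
  define mx where "mx = (\<lambda>v. max (\<sigma> v) (\<eta> v))"
  define mn where "mn = (\<lambda>v. min (\<sigma> v) (\<eta> v))"
  have J: "(\<Sum>(u,v)\<in>P1. \<sigma> u * \<sigma> v) + (\<Sum>(u,v)\<in>P1. \<eta> u * \<eta> v) \<le> (\<Sum>(u,v)\<in>P1. mx u * mx v) + (\<Sum>(u,v)\<in>P1. mn u * mn v)"
    unfolding sum.distrib[symmetric] by (rule sum_mono) (auto simp: mx_def mn_def rearr)
  have B: "(\<Sum>(u,v)\<in>P2. \<sigma> u * \<tau>p v) + (\<Sum>(u,v)\<in>P2. \<eta> u * \<tau>m v) \<le> (\<Sum>(u,v)\<in>P2. mx u * \<tau>p v) + (\<Sum>(u,v)\<in>P2. mn u * \<tau>m v)"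
    unfolding sum.distrib[symmetric]
  proof (rule sum_mono)
    fix p assume "p \<in> P2"
    then obtain u v where p: "p = (u,v)" and v: "v \<in> bdry S" unfolding P2_def by auto
    have "\<tau>m v \<le> \<tau>p v" using mono v by auto
    moreover have "mx u + mn u = \<sigma> u + \<eta> u" "mx u \<ge> \<sigma> u" unfolding mx_def mn_def by auto
    ultimately have "0 \<le> (mx u - \<sigma> u) * (\<tau>p v - \<tau>m v)" by simp
    then have i: "0 \<le> mx u * \<tau>p v - mx u * \<tau>m v - \<sigma> u * \<tau>p v + \<sigma> u * \<tau>m v" by (simp add: algebra_simps)
    have "mn u = \<sigma> u + \<eta> u - mx u" using \<open>mx u + mn u = \<sigma> u + \<eta> u\<close> by simp
    then have e: "mn u * \<tau>m v = \<sigma> u * \<tau>m v + \<eta> u * \<tau>m v - mx u * \<tau>m v" by (simp only: left_diff_distrib distrib_right)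
    show "(case p of (u, v) \<Rightarrow> \<sigma> u * \<tau>p v) + (case p of (u, v) \<Rightarrow> \<eta> u * \<tau>m v)
         \<le> (case p of (u, v) \<Rightarrow> mx u * \<tau>p v) + (case p of (u, v) \<Rightarrow> mn u * \<tau>m v)"
      unfolding p using i e by simp
  qed
  have F: "(\<Sum>u\<in>S. \<sigma> u * hfield h \<Delta> \<Delta>' N t u) + (\<Sum>u\<in>S. \<eta> u * hfield h \<Delta> \<Delta>' N t u)
      = (\<Sum>u\<in>S. mx u * hfield h \<Delta> \<Delta>' N t u) + (\<Sum>u\<in>S. mn u * hfield h \<Delta> \<Delta>' N t u)"
    unfolding sum.distrib[symmetric]
  proof (rule sum.cong)
    fix u
    have "mx u + mn u = \<sigma> u + \<eta> u" unfolding mx_def mn_def by auto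
    then show "\<sigma> u * hfield h \<Delta> \<Delta>' N t u + \<eta> u * hfield h \<Delta> \<Delta>' N t u =
         mx u * hfield h \<Delta> \<Delta>' N t u + mn u * hfield h \<Delta> \<Delta>' N t u"
      by (metis distrib_right)
  qed simp
  show ?thesis unfolding Ham_def P1_def[symmetric] P2_def[symmetric] mx_def[symmetric] mn_def[symmetric]
    using J B F by linarith
qed



lemma mx_in: "\<sigma> \<in> configs S \<Longrightarrow> \<eta> \<in> configs S \<Longrightarrow> (\<lambda>v. max (\<sigma> v) (\<eta> v)) \<in> configs S"
  unfolding configs_def max_def by auto
lemma mn_in: "\<sigma> \<in> configs S \<Longrightarrow> \<eta> \<in> configs S \<Longrightarrow> (\<lambda>v. min (\<sigma> v) (\<eta> v)) \<in> configs S"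
  unfolding configs_def min_def by auto

lemma spin_split:
  fixes a :: "(vtx \<Rightarrow> real) \<Rightarrow> real"
  assumes fin: "finite S" and v: "v \<in> S"
  shows "(\<Sum>\<sigma>\<in>configs S. \<sigma> v * a \<sigma>) = 2 * (\<Sum>\<sigma>\<in>{\<sigma>\<in>configs S. \<sigma> v = 1}. a \<sigma>) - (\<Sum>\<sigma>\<in>configs S. a \<sigma>)"
proof -
  have fc: "finite (configs S)" using fin by (rule finite_configs)
  have "(\<Sum>\<sigma>\<in>configs S. \<sigma> v * a \<sigma>) = (\<Sum>\<sigma>\<in>configs S. (if \<sigma> v = 1 then 2 * a \<sigma> else 0) - a \<sigma>)"
  proof (rule sum.cong)
    fix \<sigma> assume "\<sigma> \<in> configs S"
    then have "\<sigma> v = 1 \<or> \<sigma> v = -1" using v unfolding configs_def by auto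
    then show "\<sigma> v * a \<sigma> = (if \<sigma> v = 1 then 2 * a \<sigma> else 0) - a \<sigma>" by auto
  qed simp
  also have "\<dots> = (\<Sum>\<sigma>\<in>configs S. if \<sigma> v = 1 then 2 * a \<sigma> else 0) - (\<Sum>\<sigma>\<in>configs S. a \<sigma>)"
    by (simp add: sum_subtractf)
  also have "(\<Sum>\<sigma>\<in>configs S. if \<sigma> v = 1 then 2 * a \<sigma> else 0) = (\<Sum>\<sigma>\<in>configs S \<inter> {\<sigma>. \<sigma> v = 1}. 2 * a \<sigma>)"
    using fc by (simp add: sum.inter_restrict)
  also have "\<dots> = 2 * (\<Sum>\<sigma>\<in>{\<sigma>\<in>configs S. \<sigma> v = 1}. a \<sigma>)"
    by (simp add: sum_distrib_left Int_def)
  finally show ?thesis .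
qed

lemma restrict_sum:
  assumes "finite (configs S)"
  shows "(\<Sum>\<sigma>\<in>\<Omega> \<inter> configs S. f \<sigma>) = (\<Sum>\<sigma>\<in>configs S. if \<sigma> \<in> \<Omega> then f \<sigma> else 0)"
  using sum.inter_restrict[OF assms, of f \<Omega>] by (simp add: Int_commute)

lemma cond_spin_mono:
  assumes fin: "finite S" and v: "v \<in> S" and mono: "\<forall>v\<in>bdry S. \<tau>m v \<le> \<tau>p v" and bpos: "\<beta> > 0"
    and inc: "increasing_set S \<Omega>p" and nep: "\<Omega>p \<noteq> {}"
    and dec: "decreasing_set S \<Omega>m" and nem: "\<Omega>m \<noteq> {}"
  shows "cond_spin \<beta> h \<Delta> \<Delta>' N S \<tau>m t \<Omega>m v \<le> cond_spin \<beta> h \<Delta> \<Delta>' N S \<tau>p t \<Omega>p v"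
proof -
  have fc: "finite (configs S)" using fin by (rule finite_configs)
  define Wp where "Wp = weight \<beta> h \<Delta> \<Delta>' N S \<tau>p t"
  define Wm where "Wm = weight \<beta> h \<Delta> \<Delta>' N S \<tau>m t"
  define a where "a \<sigma> = (if \<sigma> \<in> \<Omega>p then Wp \<sigma> else 0)" for \<sigma>
  define b where "b \<sigma> = (if \<sigma> \<in> \<Omega>m then Wm \<sigma> else 0)" for \<sigma>
  define U where "U = {\<sigma>\<in>configs S. \<sigma> v = 1}"
  have Wpp: "Wp \<sigma> > 0" and Wmp: "Wm \<sigma> > 0" for \<sigma> unfolding Wp_def Wm_def by (rule weight_pos)+
  have ann: "a \<sigma> \<ge> 0" "b \<sigma> \<ge> 0" for \<sigma> unfolding a_def b_def using Wpp Wmp less_imp_le by auto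
  have Psub: "\<Omega>p \<subseteq> configs S" using inc unfolding increasing_set_def by auto
  have Msub: "\<Omega>m \<subseteq> configs S" using dec unfolding decreasing_set_def by auto
  have cond: "\<forall>\<sigma>\<in>configs S. \<forall>\<eta>\<in>configs S. a \<sigma> * b \<eta> \<le> a (\<lambda>v. max (\<sigma> v) (\<eta> v)) * b (\<lambda>v. min (\<sigma> v) (\<eta> v))"
  proof (intro ballI)
    fix \<sigma> \<eta> assume s: "\<sigma> \<in> configs S" and e: "\<eta> \<in> configs S"
    define mx where "mx = (\<lambda>v. max (\<sigma> v) (\<eta> v))"
    define mn where "mn = (\<lambda>v. min (\<sigma> v) (\<eta> v))"
    have "a \<sigma> * b \<eta> \<le> a mx * b mn"
    proof (cases "\<sigma> \<in> \<Omega>p \<and> \<eta> \<in> \<Omega>m")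
      case False
      then have "a \<sigma> * b \<eta> = 0" unfolding a_def b_def by auto
      then show ?thesis using mult_nonneg_nonneg[OF ann(1) ann(2)] by auto
    next
      case True
      have mxc: "mx \<in> configs S" "mn \<in> configs S" unfolding mx_def mn_def using s e by (auto intro: mx_in mn_in)
      have "mx \<in> \<Omega>p" using inc True mxc unfolding increasing_set_def mx_def by auto
      moreover have "mn \<in> \<Omega>m"
      proof (rule ccontr)
        assume "mn \<notin> \<Omega>m"
        then have "mn \<in> configs S - \<Omega>m" using mxc by auto
        moreover have "\<forall>v\<in>S. mn v \<le> \<eta> v" unfolding mn_def by auto
        ultimately have "\<eta> \<in> configs S - \<Omega>m" using dec e unfolding decreasing_set_def increasing_set_def by blast
        then show False using True by auto
      qed
      moreover have "Wp \<sigma> * Wm \<eta> \<le> Wp mx * Wm mn"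
      proof -
        have "Ham h \<Delta> \<Delta>' N S \<tau>p t mx + Ham h \<Delta> \<Delta>' N S \<tau>m t mn \<le> Ham h \<Delta> \<Delta>' N S \<tau>p t \<sigma> + Ham h \<Delta> \<Delta>' N S \<tau>m t \<eta>"
          unfolding mx_def mn_def by (rule Ham_super[OF mono])
        then have "\<beta> * (Ham h \<Delta> \<Delta>' N S \<tau>p t mx + Ham h \<Delta> \<Delta>' N S \<tau>m t mn) \<le> \<beta> * (Ham h \<Delta> \<Delta>' N S \<tau>p t \<sigma> + Ham h \<Delta> \<Delta>' N S \<tau>m t \<eta>)"
          using bpos by (intro mult_left_mono) auto
        then have "- \<beta> * Ham h \<Delta> \<Delta>' N S \<tau>p t \<sigma> + - \<beta> * Ham h \<Delta> \<Delta>' N S \<tau>m t \<eta> \<le> - \<beta> * Ham h \<Delta> \<Delta>' N S \<tau>p t mx + - \<beta> * Ham h \<Delta> \<Delta>' N S \<tau>m t mn"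
          by (simp add: algebra_simps)
        then show ?thesis unfolding Wp_def Wm_def weight_def by (simp flip: exp_add)
      qed
      ultimately show ?thesis using True unfolding a_def b_def by simp
    qed
    then show "a \<sigma> * b \<eta> \<le> a (\<lambda>v. max (\<sigma> v) (\<eta> v)) * b (\<lambda>v. min (\<sigma> v) (\<eta> v))"
      unfolding mx_def mn_def .
  qed
  have up: "\<forall>\<sigma>\<in>U. \<forall>\<eta>\<in>configs S. (\<forall>v\<in>S. \<sigma> v \<le> \<eta> v) \<longrightarrow> \<eta> \<in> U"
  proof (intro ballI impI)
    fix \<sigma> \<eta> assume "\<sigma> \<in> U" "\<eta> \<in> configs S" "\<forall>v\<in>S. \<sigma> v \<le> \<eta> v"
    then have "\<eta> v \<ge> 1" "\<eta> v = 1 \<or> \<eta> v = -1" using v unfolding U_def configs_def by auto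
    then show "\<eta> \<in> U" using \<open>\<eta> \<in> configs S\<close> unfolding U_def by auto
  qed
  have H: "(\<Sum>\<sigma>\<in>configs S. a \<sigma>) * (\<Sum>\<sigma>\<in>U. b \<sigma>) \<le> (\<Sum>\<sigma>\<in>U. a \<sigma>) * (\<Sum>\<sigma>\<in>configs S. b \<sigma>)"
    by (rule holley_configs[OF fin _ cond _ up]) (auto simp: ann U_def)
  define AL where "AL = (\<Sum>\<sigma>\<in>configs S. a \<sigma>)"
  define BL where "BL = (\<Sum>\<sigma>\<in>configs S. b \<sigma>)"
  define AU where "AU = (\<Sum>\<sigma>\<in>U. a \<sigma>)"
  define BU where "BU = (\<Sum>\<sigma>\<in>U. b \<sigma>)"
  have ALp: "AL > 0"
  proof -
    obtain \<sigma> where "\<sigma> \<in> \<Omega>p" using nep by auto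
    then show ?thesis unfolding AL_def using Psub fc ann Wpp
      by (intro sum_pos2[of _ \<sigma>]) (auto simp: a_def)
  qed
  have BLp: "BL > 0"
  proof -
    obtain \<sigma> where "\<sigma> \<in> \<Omega>m" using nem by auto
    then show ?thesis unfolding BL_def using Msub fc ann Wmp
      by (intro sum_pos2[of _ \<sigma>]) (auto simp: b_def)
  qed
  have csp: "cond_spin \<beta> h \<Delta> \<Delta>' N S \<tau>p t \<Omega>p v = (2 * AU - AL) / AL"
  proof -
    have "(\<Sum>\<sigma>\<in>\<Omega>p \<inter> configs S. \<sigma> v * Wp \<sigma>) = (\<Sum>\<sigma>\<in>configs S. \<sigma> v * a \<sigma>)"
      unfolding restrict_sum[OF fc] a_def by (rule sum.cong) auto
    moreover have "(\<Sum>\<sigma>\<in>\<Omega>p \<inter> configs S. Wp \<sigma>) = AL"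
      unfolding restrict_sum[OF fc] AL_def a_def by simp
    ultimately show ?thesis unfolding cond_spin_def Wp_def[symmetric]
      by (simp add: spin_split[OF fin v] AU_def AL_def U_def)
  qed
  have csm: "cond_spin \<beta> h \<Delta> \<Delta>' N S \<tau>m t \<Omega>m v = (2 * BU - BL) / BL"
  proof -
    have "(\<Sum>\<sigma>\<in>\<Omega>m \<inter> configs S. \<sigma> v * Wm \<sigma>) = (\<Sum>\<sigma>\<in>configs S. \<sigma> v * b \<sigma>)"
      unfolding restrict_sum[OF fc] b_def by (rule sum.cong) auto
    moreover have "(\<Sum>\<sigma>\<in>\<Omega>m \<inter> configs S. Wm \<sigma>) = BL"
      unfolding restrict_sum[OF fc] BL_def b_def by simp
    ultimately show ?thesis unfolding cond_spin_def Wm_def[symmetric]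
      by (simp add: spin_split[OF fin v] BU_def BL_def U_def)
  qed
  have "AL * BU \<le> AU * BL" using H unfolding AL_def BL_def AU_def BU_def .
  then have "BU / BL \<le> AU / AL" using ALp BLp by (simp add: divide_simps mult.commute)
  then have "(2 * BU - BL) / BL \<le> (2 * AU - AL) / AL" using ALp BLp by (simp add: diff_divide_distrib)
  then show ?thesis using csp csm by simp
qed



lemma expsum_pos:
  assumes "finite A" "A \<noteq> {}" "\<forall>\<sigma>\<in>A. c \<sigma> > (0::real)"
  shows "(\<Sum>\<sigma>\<in>A. c \<sigma> * exp (t * k \<sigma>)) > 0"
  using assms by (intro sum_pos) auto

lemma expsum_deriv:
  assumes "finite A" "A \<noteq> {}" "\<forall>\<sigma>\<in>A. c \<sigma> > (0::real)"
  shows "((\<lambda>t. ln (\<Sum>\<sigma>\<in>A. c \<sigma> * exp (t * k \<sigma>))) has_real_derivative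
          (\<Sum>\<sigma>\<in>A. k \<sigma> * (c \<sigma> * exp (t * k \<sigma>))) / (\<Sum>\<sigma>\<in>A. c \<sigma> * exp (t * k \<sigma>))) (at t within X)"
proof -
  have d: "((\<lambda>t. \<Sum>\<sigma>\<in>A. c \<sigma> * exp (t * k \<sigma>)) has_real_derivative (\<Sum>\<sigma>\<in>A. k \<sigma> * (c \<sigma> * exp (t * k \<sigma>)))) (at t within X)"
  proof (rule DERIV_sum)
    fix \<sigma> show "((\<lambda>t. c \<sigma> * exp (t * k \<sigma>)) has_real_derivative k \<sigma> * (c \<sigma> * exp (t * k \<sigma>))) (at t within X)"
      by (auto intro!: derivative_eq_intros)
  qed
  have p: "(\<Sum>\<sigma>\<in>A. c \<sigma> * exp (t * k \<sigma>)) > 0" by (rule expsum_pos[OF assms])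
  show ?thesis
    using DERIV_chain2[OF DERIV_ln_divide[OF p] d] by (simp add: divide_simps)
qed

lemma expsum_ftc:
  assumes "finite A" "A \<noteq> {}" "\<forall>\<sigma>\<in>A. c \<sigma> > (0::real)"
  shows "((\<lambda>t. (\<Sum>\<sigma>\<in>A. k \<sigma> * (c \<sigma> * exp (t * k \<sigma>))) / (\<Sum>\<sigma>\<in>A. c \<sigma> * exp (t * k \<sigma>))) has_integral
          (ln (\<Sum>\<sigma>\<in>A. c \<sigma> * exp (1 * k \<sigma>)) - ln (\<Sum>\<sigma>\<in>A. c \<sigma> * exp (0 * k \<sigma>)))) {0..1}"
  by (rule fundamental_theorem_of_calculus)
     (auto simp: has_real_derivative_iff_has_vector_derivative[symmetric] intro: expsum_deriv[OF assms])

lemma expsum_cont: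
  assumes "finite A" "A \<noteq> {}" "\<forall>\<sigma>\<in>A. c \<sigma> > (0::real)"
  shows "continuous_on X (\<lambda>t. (\<Sum>\<sigma>\<in>A. f \<sigma> * (c \<sigma> * exp (t * k \<sigma>))) / (\<Sum>\<sigma>\<in>A. c \<sigma> * exp (t * k \<sigma>)))"
proof (rule continuous_on_divide)
  show "continuous_on X (\<lambda>t. \<Sum>\<sigma>\<in>A. f \<sigma> * (c \<sigma> * exp (t * k \<sigma>)))"
    by (intro continuous_intros)
  show "continuous_on X (\<lambda>t. \<Sum>\<sigma>\<in>A. c \<sigma> * exp (t * k \<sigma>))"
    by (intro continuous_intros)
  show "\<forall>t\<in>X. (\<Sum>\<sigma>\<in>A. c \<sigma> * exp (t * k \<sigma>)) \<noteq> 0"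
    using expsum_pos[OF assms] by (metis less_irrefl)
qed

lemma Lam_mono: "r \<le> s \<Longrightarrow> Lam r \<subseteq> Lam s"
  unfolding Lam_def by auto

lemma adj_cases: "adj u v \<Longrightarrow> u \<in> {(fst v + 1, snd v), (fst v - 1, snd v), (fst v, snd v + 1), (fst v, snd v - 1)}"
  unfolding adj_def by (cases u, cases v) (auto simp: abs_if split: if_splits)

lemma card_nbrs: "card {u\<in>S. adj u v} \<le> 4"
proof -
  have "card {u\<in>S. adj u v} \<le> card {(fst v + 1, snd v), (fst v - 1, snd v), (fst v, snd v + 1), (fst v, snd v - 1)}"
    by (rule card_mono) (auto dest: adj_cases)
  also have "\<dots> \<le> 4" by (simp add: card_insert_if)
  finally show ?thesis .
qed

lemma bdry_sub: "S \<subseteq> Lam N \<Longrightarrow> bdry S \<subseteq> Lam (N + 1)"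
  unfolding bdry_def Lam_def adj_def by auto



lemma Z_form:
  assumes "finite S" "Lam (N div 8) \<subseteq> S"
  shows "(\<Sum>\<sigma>\<in>A. g \<sigma> * weight \<beta> h \<Delta> \<Delta>' N S \<tau> t \<sigma>) =
    (\<Sum>\<sigma>\<in>A. g \<sigma> * (weight \<beta> h \<Delta> \<Delta>' N S \<tau> 0 \<sigma> * exp (t * (\<beta> * \<Delta> * (\<Sum>u\<in>Lam (N div 8). \<sigma> u)))))"
  by (rule sum.cong[OF refl]) (simp only: weight_t[OF assms, of \<beta> h \<Delta> \<Delta>' \<tau> t])

lemma Z_form1:
  assumes "finite S" "Lam (N div 8) \<subseteq> S"
  shows "(\<Sum>\<sigma>\<in>A. weight \<beta> h \<Delta> \<Delta>' N S \<tau> t \<sigma>) =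
    (\<Sum>\<sigma>\<in>A. weight \<beta> h \<Delta> \<Delta>' N S \<tau> 0 \<sigma> * exp (t * (\<beta> * \<Delta> * (\<Sum>u\<in>Lam (N div 8). \<sigma> u))))"
  by (rule sum.cong[OF refl]) (simp only: weight_t[OF assms, of \<beta> h \<Delta> \<Delta>' \<tau> t])

lemma cond_spin_form:
  assumes "finite S" "Lam (N div 8) \<subseteq> S"
  shows "cond_spin \<beta> h \<Delta> \<Delta>' N S \<tau> t \<Omega> v =
    (\<Sum>\<sigma>\<in>\<Omega> \<inter> configs S. \<sigma> v * (weight \<beta> h \<Delta> \<Delta>' N S \<tau> 0 \<sigma> * exp (t * (\<beta> * \<Delta> * (\<Sum>u\<in>Lam (N div 8). \<sigma> u))))) /
    (\<Sum>\<sigma>\<in>\<Omega> \<inter> configs S. weight \<beta> h \<Delta> \<Delta>' N S \<tau> 0 \<sigma> * exp (t * (\<beta> * \<Delta> * (\<Sum>u\<in>Lam (N div 8). \<sigma> u))))"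
  unfolding cond_spin_def Z_form[OF assms] Z_form1[OF assms] ..

lemma deriv_form:
  assumes "finite S" "Lam (N div 8) \<subseteq> S"
  shows "(\<Sum>\<sigma>\<in>\<Omega> \<inter> configs S. (\<beta> * \<Delta> * (\<Sum>u\<in>Lam (N div 8). \<sigma> u)) * (weight \<beta> h \<Delta> \<Delta>' N S \<tau> 0 \<sigma> * exp (t * (\<beta> * \<Delta> * (\<Sum>u\<in>Lam (N div 8). \<sigma> u))))) /
    (\<Sum>\<sigma>\<in>\<Omega> \<inter> configs S. weight \<beta> h \<Delta> \<Delta>' N S \<tau> 0 \<sigma> * exp (t * (\<beta> * \<Delta> * (\<Sum>u\<in>Lam (N div 8). \<sigma> u))))
    = \<beta> * \<Delta> * (\<Sum>v\<in>Lam (N div 8). cond_spin \<beta> h \<Delta> \<Delta>' N S \<tau> t \<Omega> v)"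
proof -
  define w where "w \<sigma> = weight \<beta> h \<Delta> \<Delta>' N S \<tau> 0 \<sigma> * exp (t * (\<beta> * \<Delta> * (\<Sum>u\<in>Lam (N div 8). \<sigma> u)))" for \<sigma>
  define A where "A = \<Omega> \<inter> configs S"
  have "(\<Sum>\<sigma>\<in>A. (\<beta> * \<Delta> * (\<Sum>u\<in>Lam (N div 8). \<sigma> u)) * w \<sigma>) = \<beta> * \<Delta> * (\<Sum>\<sigma>\<in>A. \<Sum>u\<in>Lam (N div 8). \<sigma> u * w \<sigma>)"
    by (simp add: sum_distrib_left sum_distrib_right mult.assoc)
  also have "(\<Sum>\<sigma>\<in>A. \<Sum>u\<in>Lam (N div 8). \<sigma> u * w \<sigma>) = (\<Sum>u\<in>Lam (N div 8). \<Sum>\<sigma>\<in>A. \<sigma> u * w \<sigma>)"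
    by (rule sum.swap)
  finally have e: "(\<Sum>\<sigma>\<in>A. (\<beta> * \<Delta> * (\<Sum>u\<in>Lam (N div 8). \<sigma> u)) * w \<sigma>) = \<beta> * \<Delta> * (\<Sum>u\<in>Lam (N div 8). \<Sum>\<sigma>\<in>A. \<sigma> u * w \<sigma>)" .
  show ?thesis
    unfolding cond_spin_form[OF assms] w_def[symmetric] A_def[symmetric] e sum_divide_distrib[symmetric]
    by simp
qed



lemma finite_bdry: "S \<subseteq> Lam N \<Longrightarrow> finite (bdry S)"
  using bdry_sub finite_Lam finite_subset by metis

lemma Ham_bdry:
  assumes SN: "S \<subseteq> Lam N" and s: "\<sigma> \<in> configs S" and mono: "\<forall>v\<in>bdry S. \<tau>m v \<le> \<tau>p v"
  shows "\<bar>Ham h \<Delta> \<Delta>' N S \<tau>m t \<sigma> - Ham h \<Delta> \<Delta>' N S \<tau>p t \<sigma>\<bar> \<le> 4 * (\<Sum>v\<in>bdry S. \<tau>p v - \<tau>m v)"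
proof -
  have fin: "finite S" using SN finite_Lam finite_subset by metis
  have fb: "finite (bdry S)" using SN by (rule finite_bdry)
  define P2 where "P2 = {(u,v). u \<in> S \<and> v \<in> bdry S \<and> adj u v}"
  define g where "g v = \<tau>p v - \<tau>m v" for v
  have P2S: "P2 = (SIGMA u:S. {v. v \<in> bdry S \<and> adj u v})" unfolding P2_def by auto
  have "Ham h \<Delta> \<Delta>' N S \<tau>m t \<sigma> - Ham h \<Delta> \<Delta>' N S \<tau>p t \<sigma> = (\<Sum>(u,v)\<in>P2. \<sigma> u * \<tau>p v) - (\<Sum>(u,v)\<in>P2. \<sigma> u * \<tau>m v)"
    unfolding Ham_def P2_def by simp
  also have "\<dots> = (\<Sum>(u,v)\<in>P2. \<sigma> u * g v)"
    unfolding sum_subtractf[symmetric] by (rule sum.cong) (auto simp: g_def algebra_simps)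
  finally have e: "Ham h \<Delta> \<Delta>' N S \<tau>m t \<sigma> - Ham h \<Delta> \<Delta>' N S \<tau>p t \<sigma> = (\<Sum>(u,v)\<in>P2. \<sigma> u * g v)" .
  have "\<bar>\<Sum>(u,v)\<in>P2. \<sigma> u * g v\<bar> \<le> (\<Sum>(u,v)\<in>P2. \<bar>\<sigma> u * g v\<bar>)"
    by (rule order_trans[OF sum_abs]) (simp add: case_prod_beta)
  also have "\<dots> = (\<Sum>(u,v)\<in>P2. g v)"
  proof (rule sum.cong)
    fix p assume "p \<in> P2"
    then obtain u v where p: "p = (u,v)" "u \<in> S" "v \<in> bdry S" unfolding P2_def by auto
    have "\<bar>\<sigma> u\<bar> = 1" using s p(2) unfolding configs_def by auto
    moreover have "g v \<ge> 0" using mono p(3) unfolding g_def by auto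
    ultimately show "(case p of (u, v) \<Rightarrow> \<bar>\<sigma> u * g v\<bar>) = (case p of (u, v) \<Rightarrow> g v)"
      using p(1) by (simp add: abs_mult)
  qed simp
  also have "(\<Sum>(u,v)\<in>P2. g v) = (\<Sum>u\<in>S. \<Sum>v\<in>{v. v \<in> bdry S \<and> adj u v}. g v)"
    unfolding P2S using fin fb by (subst sum.Sigma) auto
  also have "\<dots> = (\<Sum>v\<in>bdry S. \<Sum>u\<in>{u. u \<in> S \<and> adj u v}. g v)"
    using fin fb by (rule sum.swap_restrict)
  also have "\<dots> = (\<Sum>v\<in>bdry S. real (card {u\<in>S. adj u v}) * g v)" by simp
  also have "\<dots> \<le> (\<Sum>v\<in>bdry S. 4 * g v)"
  proof (rule sum_mono)
    fix v assume "v \<in> bdry S"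
    then have "g v \<ge> 0" using mono unfolding g_def by auto
    moreover have "real (card {u\<in>S. adj u v}) \<le> 4" using card_nbrs[of S v] by linarith
    ultimately show "real (card {u\<in>S. adj u v}) * g v \<le> 4 * g v" by (rule mult_right_mono[rotated])
  qed
  also have "\<dots> = 4 * (\<Sum>v\<in>bdry S. \<tau>p v - \<tau>m v)" by (simp add: sum_distrib_left g_def)
  finally show ?thesis using e by simp
qed



lemma ftc_cs:
  assumes fin: "finite S" and L8: "Lam (N div 8) \<subseteq> S" and sub: "\<Omega> \<subseteq> configs S" and ne: "\<Omega> \<noteq> {}"
  shows "((\<lambda>t. \<beta> * \<Delta> * (\<Sum>v\<in>Lam (N div 8). cond_spin \<beta> h \<Delta> \<Delta>' N S \<tau> t \<Omega> v)) has_integral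
    (ln (\<Sum>\<sigma>\<in>\<Omega> \<inter> configs S. weight \<beta> h \<Delta> \<Delta>' N S \<tau> 1 \<sigma>) - ln (\<Sum>\<sigma>\<in>\<Omega> \<inter> configs S. weight \<beta> h \<Delta> \<Delta>' N S \<tau> 0 \<sigma>))) {0..1}"
proof -
  define A where "A = \<Omega> \<inter> configs S"
  have fA: "finite A" unfolding A_def using finite_configs[OF fin] by simp
  have nA: "A \<noteq> {}" unfolding A_def using sub ne by auto
  have cp: "\<forall>\<sigma>\<in>A. weight \<beta> h \<Delta> \<Delta>' N S \<tau> 0 \<sigma> > 0" using weight_pos by auto
  note Hm = expsum_ftc[OF fA nA cp, of "\<lambda>\<sigma>. \<beta> * \<Delta> * (\<Sum>u\<in>Lam (N div 8). \<sigma> u)"]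
  have e1: "(\<Sum>\<sigma>\<in>A. weight \<beta> h \<Delta> \<Delta>' N S \<tau> 1 \<sigma>) = (\<Sum>\<sigma>\<in>A. weight \<beta> h \<Delta> \<Delta>' N S \<tau> 0 \<sigma> * exp (1 * (\<beta> * \<Delta> * (\<Sum>u\<in>Lam (N div 8). \<sigma> u))))"
    by (rule Z_form1[OF fin L8])
  have e0: "(\<Sum>\<sigma>\<in>A. weight \<beta> h \<Delta> \<Delta>' N S \<tau> 0 \<sigma> * exp (0 * (\<beta> * \<Delta> * (\<Sum>u\<in>Lam (N div 8). \<sigma> u)))) = (\<Sum>\<sigma>\<in>A. weight \<beta> h \<Delta> \<Delta>' N S \<tau> 0 \<sigma>)"
    by simp
  show ?thesis using Hm unfolding A_def[symmetric] e1 e0 unfolding A_def deriv_form[OF fin L8] .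
qed

lemma cont_magn:
  assumes fin: "finite S" and L8: "Lam (N div 8) \<subseteq> S" and sub: "\<Omega> \<subseteq> configs S" and ne: "\<Omega> \<noteq> {}"
  shows "continuous_on X (\<lambda>t. magn \<beta> h \<Delta> \<Delta>' N S \<tau> t \<Omega>)"
proof -
  define A where "A = \<Omega> \<inter> configs S"
  have fA: "finite A" unfolding A_def using finite_configs[OF fin] by simp
  have nA: "A \<noteq> {}" unfolding A_def using sub ne by auto
  have cp: "\<forall>\<sigma>\<in>A. weight \<beta> h \<Delta> \<Delta>' N S \<tau> 0 \<sigma> > 0" using weight_pos by auto
  show ?thesis unfolding magn_def cond_spin_form[OF fin L8] A_def[symmetric]
    by (intro continuous_on_sum ballI expsum_cont[OF fA nA cp])
qed

lemma weight_cmp: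
  assumes SN: "S \<subseteq> Lam N" and s: "\<sigma> \<in> configs S" and mono: "\<forall>v\<in>bdry S. \<tau>m v \<le> \<tau>p v" and bpos: "\<beta> > 0"
  shows "weight \<beta> h \<Delta> \<Delta>' N S \<tau>p t \<sigma> \<le> exp (4 * \<beta> * (\<Sum>v\<in>bdry S. \<tau>p v - \<tau>m v)) * weight \<beta> h \<Delta> \<Delta>' N S \<tau>m t \<sigma>"
    and "weight \<beta> h \<Delta> \<Delta>' N S \<tau>m t \<sigma> \<le> exp (4 * \<beta> * (\<Sum>v\<in>bdry S. \<tau>p v - \<tau>m v)) * weight \<beta> h \<Delta> \<Delta>' N S \<tau>p t \<sigma>"
proof -
  define D where "D = (\<Sum>v\<in>bdry S. \<tau>p v - \<tau>m v)"
  define Hp where "Hp = Ham h \<Delta> \<Delta>' N S \<tau>p t \<sigma>"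
  define Hm where "Hm = Ham h \<Delta> \<Delta>' N S \<tau>m t \<sigma>"
  have a: "\<bar>Hm - Hp\<bar> \<le> 4 * D" unfolding Hm_def Hp_def D_def by (rule Ham_bdry[OF SN s mono])
  have b: "\<beta> * \<bar>Hm - Hp\<bar> \<le> \<beta> * (4 * D)" using a bpos by (intro mult_left_mono) auto
  have "\<beta> * (Hm - Hp) \<le> \<beta> * \<bar>Hm - Hp\<bar>" "\<beta> * (Hp - Hm) \<le> \<beta> * \<bar>Hm - Hp\<bar>" using bpos by (intro mult_left_mono; simp)+
  then have c1: "- \<beta> * Hp \<le> 4 * \<beta> * D + - \<beta> * Hm" and c2: "- \<beta> * Hm \<le> 4 * \<beta> * D + - \<beta> * Hp"
    using b by (simp_all add: algebra_simps)
  show "weight \<beta> h \<Delta> \<Delta>' N S \<tau>p t \<sigma> \<le> exp (4 * \<beta> * (\<Sum>v\<in>bdry S. \<tau>p v - \<tau>m v)) * weight \<beta> h \<Delta> \<Delta>' N S \<tau>m t \<sigma>"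
    unfolding weight_def D_def[symmetric] Hp_def[symmetric] Hm_def[symmetric] exp_add[symmetric] using c1 by simp
  show "weight \<beta> h \<Delta> \<Delta>' N S \<tau>m t \<sigma> \<le> exp (4 * \<beta> * (\<Sum>v\<in>bdry S. \<tau>p v - \<tau>m v)) * weight \<beta> h \<Delta> \<Delta>' N S \<tau>p t \<sigma>"
    unfolding weight_def D_def[symmetric] Hp_def[symmetric] Hm_def[symmetric] exp_add[symmetric] using c2 by simp
qed



theorem lemma3p4:
  fixes h :: "vtx \<Rightarrow> real" and \<beta> \<Delta> \<Delta>' :: real and n :: nat and N :: int
    and S :: "vtx set" and \<tau>p \<tau>m :: "vtx \<Rightarrow> real"
    and \<Omega>p \<Omega>m :: "(vtx \<Rightarrow> real) set"
  assumes "\<beta> > 0" and "N = 2 ^ n" and "n \<ge> 10" and "\<Delta> > 0" and "\<Delta>' \<ge> 0"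
    and "S \<subseteq> Lam N" and "Lam (N div 8) \<subseteq> S"
    and "\<tau>p \<in> configs (bdry S)" and "\<tau>m \<in> configs (bdry S)"
    and "\<forall>v\<in>bdry S. \<tau>m v \<le> \<tau>p v"
    and "\<Omega>p \<noteq> {}" and "increasing_set S \<Omega>p"
    and "\<Omega>m \<noteq> {}" and "decreasing_set S \<Omega>m"
  shows "\<Delta> * integral {0..1} (\<lambda>t. magn \<beta> h \<Delta> \<Delta>' N S \<tau>p t \<Omega>p - magn \<beta> h \<Delta> \<Delta>' N S \<tau>m t \<Omega>m)
     \<le> 8 * (\<Sum>v\<in>bdry S. \<tau>p v - \<tau>m v)
        - (1/\<beta>) * (ln (gibbs \<beta> h \<Delta> \<Delta>' N S \<tau>p 0 \<Omega>p) + ln (gibbs \<beta> h \<Delta> \<Delta>' N S \<tau>m 1 \<Omega>m))"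
proof -
  note bpos = assms(1) and dpos = assms(4) and SN = assms(6) and L8 = assms(7) and mono = assms(10)
  have fin: "finite S" using SN finite_Lam finite_subset by metis
  have fc: "finite (configs S)" using fin by (rule finite_configs)
  have Psub: "\<Omega>p \<subseteq> configs S" using assms(12) unfolding increasing_set_def by auto
  have Msub: "\<Omega>m \<subseteq> configs S" using assms(14) unfolding decreasing_set_def by auto
  have Npos: "N \<ge> 0" using assms(2) by simp
  have L32: "Lam (N div 32) \<subseteq> Lam (N div 8)" by (rule Lam_mono) (rule zdiv_mono2[OF Npos]; simp)
  define D where "D = (\<Sum>v\<in>bdry S. \<tau>p v - \<tau>m v)"
  define Z where "Z \<tau> t \<Omega> = (\<Sum>\<sigma>\<in>\<Omega> \<inter> configs S. weight \<beta> h \<Delta> \<Delta>' N S \<tau> t \<sigma>)" for \<tau> t \<Omega>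
  define cs where "cs \<tau> t \<Omega> = (\<Sum>v\<in>Lam (N div 8). cond_spin \<beta> h \<Delta> \<Delta>' N S \<tau> t \<Omega> v)" for \<tau> t \<Omega>
  define Ip where "Ip = ln (Z \<tau>p 1 \<Omega>p) - ln (Z \<tau>p 0 \<Omega>p)"
  define Im where "Im = ln (Z \<tau>m 1 \<Omega>m) - ln (Z \<tau>m 0 \<Omega>m)"
  have FTp: "((\<lambda>t. \<beta> * \<Delta> * cs \<tau>p t \<Omega>p) has_integral Ip) {0..1}"
    unfolding cs_def Ip_def Z_def by (rule ftc_cs[OF fin L8 Psub assms(11)])
  have FTm: "((\<lambda>t. \<beta> * \<Delta> * cs \<tau>m t \<Omega>m) has_integral Im) {0..1}"
    unfolding cs_def Im_def Z_def by (rule ftc_cs[OF fin L8 Msub assms(13)])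
  define G where "G t = cs \<tau>p t \<Omega>p - cs \<tau>m t \<Omega>m" for t
  have "((\<lambda>t. (1 / (\<beta> * \<Delta>)) * (\<beta> * \<Delta> * cs \<tau>p t \<Omega>p - \<beta> * \<Delta> * cs \<tau>m t \<Omega>m)) has_integral ((1 / (\<beta> * \<Delta>)) * (Ip - Im))) {0..1}"
    by (intro has_integral_mult_right has_integral_diff FTp FTm)
  moreover have "(\<lambda>t. (1 / (\<beta> * \<Delta>)) * (\<beta> * \<Delta> * cs \<tau>p t \<Omega>p - \<beta> * \<Delta> * cs \<tau>m t \<Omega>m)) = G"
    using bpos dpos by (auto simp: G_def field_simps intro!: ext)
  ultimately have HG: "(G has_integral ((Ip - Im) / (\<beta> * \<Delta>))) {0..1}" by simp
  define f where "f t = magn \<beta> h \<Delta> \<Delta>' N S \<tau>p t \<Omega>p - magn \<beta> h \<Delta> \<Delta>' N S \<tau>m t \<Omega>m" for t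
  have fint: "f integrable_on {0..1}" unfolding f_def
    by (intro integrable_continuous_interval continuous_on_diff cont_magn[OF fin L8 Psub assms(11)] cont_magn[OF fin L8 Msub assms(13)])
  have fG: "f t \<le> G t" for t
  proof -
    have "f t = (\<Sum>v\<in>Lam (N div 32). cond_spin \<beta> h \<Delta> \<Delta>' N S \<tau>p t \<Omega>p v - cond_spin \<beta> h \<Delta> \<Delta>' N S \<tau>m t \<Omega>m v)"
      unfolding f_def magn_def by (simp add: sum_subtractf)
    also have "\<dots> \<le> (\<Sum>v\<in>Lam (N div 8). cond_spin \<beta> h \<Delta> \<Delta>' N S \<tau>p t \<Omega>p v - cond_spin \<beta> h \<Delta> \<Delta>' N S \<tau>m t \<Omega>m v)"
    proof (rule sum_mono2[OF finite_Lam L32])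
      fix v assume "v \<in> Lam (N div 8) - Lam (N div 32)"
      then have "v \<in> S" using L8 by auto
      then show "0 \<le> cond_spin \<beta> h \<Delta> \<Delta>' N S \<tau>p t \<Omega>p v - cond_spin \<beta> h \<Delta> \<Delta>' N S \<tau>m t \<Omega>m v"
        using cond_spin_mono[OF fin _ mono bpos assms(12) assms(11) assms(14) assms(13)] by simp
    qed
    also have "\<dots> = G t" unfolding G_def cs_def by (simp add: sum_subtractf)
    finally show ?thesis .
  qed
  have "integral {0..1} f \<le> integral {0..1} G"
    using fint HG fG by (intro integral_le) auto
  also have "integral {0..1} G = (Ip - Im) / (\<beta> * \<Delta>)" using HG by (rule integral_unique)
  finally have i1: "\<Delta> * integral {0..1} f \<le> (Ip - Im) / \<beta>"
    using dpos bpos by (simp add: field_simps)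
  define Za where "Za \<tau> t = (\<Sum>\<sigma>\<in>configs S. weight \<beta> h \<Delta> \<Delta>' N S \<tau> t \<sigma>)" for \<tau> t
  have Zpos: "\<Omega> \<subseteq> configs S \<Longrightarrow> \<Omega> \<noteq> {} \<Longrightarrow> Z \<tau> t \<Omega> > 0" for \<Omega> \<tau> t
    unfolding Z_def using fc by (intro sum_pos) (auto simp: weight_pos)
  have Zapos: "Za \<tau> t > 0" for \<tau> t
  proof -
    have "configs S \<noteq> {}" using cfg_in[of "{}" S] by auto
    then show ?thesis unfolding Za_def using fc by (intro sum_pos) (auto simp: weight_pos)
  qed
  have Zle: "Z \<tau> t \<Omega> \<le> Za \<tau> t" for \<tau> t \<Omega>
    unfolding Z_def Za_def using fc by (intro sum_mono2) (auto simp: weight_pos less_imp_le)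
  have gp: "gibbs \<beta> h \<Delta> \<Delta>' N S \<tau>p 0 \<Omega>p = Z \<tau>p 0 \<Omega>p / Za \<tau>p 0" unfolding gibbs_def Z_def Za_def ..
  have gm: "gibbs \<beta> h \<Delta> \<Delta>' N S \<tau>m 1 \<Omega>m = Z \<tau>m 1 \<Omega>m / Za \<tau>m 1" unfolding gibbs_def Z_def Za_def ..
  have lgp: "ln (gibbs \<beta> h \<Delta> \<Delta>' N S \<tau>p 0 \<Omega>p) = ln (Z \<tau>p 0 \<Omega>p) - ln (Za \<tau>p 0)"
    unfolding gp using Zpos[OF Psub assms(11), of \<tau>p 0] Zapos[of \<tau>p 0] by (simp add: ln_div)
  have lgm: "ln (gibbs \<beta> h \<Delta> \<Delta>' N S \<tau>m 1 \<Omega>m) = ln (Z \<tau>m 1 \<Omega>m) - ln (Za \<tau>m 1)"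
    unfolding gm using Zpos[OF Msub assms(13), of \<tau>m 1] Zapos[of \<tau>m 1] by (simp add: ln_div)
  have a1: "ln (Z \<tau>p 1 \<Omega>p) \<le> ln (Za \<tau>p 1)" using Zle Zpos[OF Psub assms(11)] Zapos by simp
  have a2: "ln (Z \<tau>m 0 \<Omega>m) \<le> ln (Za \<tau>m 0)" using Zle Zpos[OF Msub assms(13)] Zapos by simp
  have Zcmp1: "Za \<tau>p t \<le> exp (4 * \<beta> * D) * Za \<tau>m t" for t
  proof -
    have "Za \<tau>p t \<le> (\<Sum>\<sigma>\<in>configs S. exp (4 * \<beta> * D) * weight \<beta> h \<Delta> \<Delta>' N S \<tau>m t \<sigma>)"
      unfolding Za_def D_def by (rule sum_mono) (rule weight_cmp(1)[OF SN _ mono bpos])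
    then show ?thesis by (simp add: Za_def sum_distrib_left)
  qed
  have Zcmp2: "Za \<tau>m t \<le> exp (4 * \<beta> * D) * Za \<tau>p t" for t
  proof -
    have "Za \<tau>m t \<le> (\<Sum>\<sigma>\<in>configs S. exp (4 * \<beta> * D) * weight \<beta> h \<Delta> \<Delta>' N S \<tau>p t \<sigma>)"
      unfolding Za_def D_def by (rule sum_mono) (rule weight_cmp(2)[OF SN _ mono bpos])
    then show ?thesis by (simp add: Za_def sum_distrib_left)
  qed
  have b1: "ln (Za \<tau>p 1) \<le> 4 * \<beta> * D + ln (Za \<tau>m 1)"
  proof -
    have "ln (Za \<tau>p 1) \<le> ln (exp (4 * \<beta> * D) * Za \<tau>m 1)" using Zcmp1 Zapos by simp
    also have "\<dots> = 4 * \<beta> * D + ln (Za \<tau>m 1)" using Zapos[of \<tau>m 1] by (simp add: ln_mult)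
    finally show ?thesis .
  qed
  have b2: "ln (Za \<tau>m 0) \<le> 4 * \<beta> * D + ln (Za \<tau>p 0)"
  proof -
    have "ln (Za \<tau>m 0) \<le> ln (exp (4 * \<beta> * D) * Za \<tau>p 0)" using Zcmp2 Zapos by simp
    also have "\<dots> = 4 * \<beta> * D + ln (Za \<tau>p 0)" using Zapos[of \<tau>p 0] by (simp add: ln_mult)
    finally show ?thesis .
  qed
  have "Ip - Im \<le> 8 * \<beta> * D - (ln (gibbs \<beta> h \<Delta> \<Delta>' N S \<tau>p 0 \<Omega>p) + ln (gibbs \<beta> h \<Delta> \<Delta>' N S \<tau>m 1 \<Omega>m))"
    unfolding Ip_def Im_def lgp lgm using a1 a2 b1 b2 by linarith
  then have "(Ip - Im) / \<beta> \<le> (8 * \<beta> * D - (ln (gibbs \<beta> h \<Delta> \<Delta>' N S \<tau>p 0 \<Omega>p) + ln (gibbs \<beta> h \<Delta> \<Delta>' N S \<tau>m 1 \<Omega>m))) / \<beta>"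
    using bpos by (intro divide_right_mono) auto
  also have "\<dots> = 8 * D - (1/\<beta>) * (ln (gibbs \<beta> h \<Delta> \<Delta>' N S \<tau>p 0 \<Omega>p) + ln (gibbs \<beta> h \<Delta> \<Delta>' N S \<tau>m 1 \<Omega>m))"
    using bpos by (simp add: diff_divide_distrib)
  finally have "(Ip - Im) / \<beta> \<le> 8 * D - (1/\<beta>) * (ln (gibbs \<beta> h \<Delta> \<Delta>' N S \<tau>p 0 \<Omega>p) + ln (gibbs \<beta> h \<Delta> \<Delta>' N S \<tau>m 1 \<Omega>m))" .
  then show ?thesis using i1 unfolding f_def D_def by simp
qed

end
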